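(* Let $\mathcal{A}=(u,A,v)$ be a pre-standard admissible linear system of dimension $n\ge 2$, with system matrix $A=(a_{ij})$, whose left family $s=A^{-1}v$ is $\mathbb{K}$-linearly dependent. Let $m\in\{2,3,\ldots,n\}$ be the minimal index such that the left subfamily $(s_m,s_{m+1},\ldots,s_n)$ is $\mathbb{K}$-linearly independent. Then there exist matrices $T,U\in\mathbb{K}^{1\times(n+1-m)}$ such that $$U+(a_{m-1,j})_{j=m}^{n}-T\,(a_{ij})_{i,j=m}^{n}=\begin{bmatrix}0&\cdots&0\end{bmatrix}\quad\text{and}\quad T\,(v_i)_{i=m}^{n}=0,$$ where the first equation holds as an identity of row vectors over $\mathbb{K}\langle X\rangle$.
   Context: $\mathbb{K}$ is a commutative field, $X=\{x_1,\ldots,x_d\}$ a finite alphabet, $\mathbb{K}\langle X\rangle$ the free associative algebra and $\mathbb{K}(\!\langle X\rangle\!)$ its free field (universal field of fractions). A linear representation of $f\in\mathbb{K}(\!\langle X\rangle\!)$ is a triple $(u,A,v)$ with $u\in\mathbb{K}^{1\times n}$, $v\in\mathbb{K}^{n\times 1}$ and full (i.e. invertible over the free field) $A=A_0\otimes 1+\sum_{\ell=1}^d A_\ell\otimes x_\ell$, $A_\ell\in\mathbb{K}^{n\times n}$, with $f=uA^{-1}v$; $n$ is its dimension. It is an admissible linear system (ALS) if $u=e_1=[1,0,\ldots,0]$. The left family is $s=A^{-1}v$ (entries $s_i$). An ALS $(u,A,v)$ of dimension $n$ for a nonzero polynomial $p\in\mathbb{K}\langle X\rangle$ is pre-standard if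 $v=[0,\ldots,0,\lambda]^\top$ for some $\lambda\in\mathbb{K}$ and $A=(a_{ij})$ is upper triangular with $a_{ii}=1$ for all $i$. *)

theory Defs
  imports Main "HOL-Library.Poly_Mapping"
begin

text \<open>Words over the alphabet X = {x_1,...,x_d}; letter x_l is encoded by the
  natural number l.  The free monoid X^* with concatenation as (non-commutative)
  monoid operation written additively, so that finitely supported maps
  ncword =>0 K form the free associative algebra K<X> via Poly_Mapping's
  convolution product.\<close>

datatype ncword = Word "nat list"

instantiation ncword :: monoid_add
begin
definition zero_ncword :: ncword where "zero_ncword = Word []"
fun plus_ncword :: "ncword \<Rightarrow> ncword \<Rightarrow> ncword" where
  "plus_ncword (Word a) (Word b) = Word (a @ b)"
instance
proof
  fix a b c :: ncword
  show "a + b + c = a + (b + c)" by (cases a; cases b; cases c) simp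
  show "0 + a = a" by (cases a) (simp add: zero_ncword_def)
  show "a + 0 = a" by (cases a) (simp add: zero_ncword_def)
qed
end

type_synonym 'k ncpoly = "ncword \<Rightarrow>\<^sub>0 'k"

definition ncconst :: "'k::field \<Rightarrow> 'k ncpoly" where
  "ncconst c = Poly_Mapping.single (Word []) c"

definition ncvar :: "nat \<Rightarrow> 'k::field ncpoly" where
  "ncvar l = Poly_Mapping.single (Word [l]) 1"

text \<open>Entry (i,j) of the system matrix A = A_0 (x) 1 + sum_{l=1}^d A_l (x) x_l,
  given the coefficient matrices A0 and Al l (l = 1..d), indices 1-based.\<close>
definition als_entry ::
  "nat \<Rightarrow> (nat \<Rightarrow> nat \<Rightarrow> 'k::field) \<Rightarrow> (nat \<Rightarrow> nat \<Rightarrow> nat \<Rightarrow> 'k) \<Rightarrow> nat \<Rightarrow> nat \<Rightarrow> 'k ncpoly"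
  where
  "als_entry d A0 Al i j = ncconst (A0 i j) + (\<Sum>l=1..d. ncconst (Al l i j) * ncvar l)"

definition nc_lin_indep :: "(nat \<Rightarrow> 'k::field ncpoly) \<Rightarrow> nat set \<Rightarrow> bool" where
  "nc_lin_indep s I \<longleftrightarrow>
     (\<forall>c::nat \<Rightarrow> 'k. (\<Sum>i\<in>I. ncconst (c i) * s i) = 0 \<longrightarrow> (\<forall>i\<in>I. c i = 0))"

end

theory Submission
  imports Defs
begin

lemma lk_single_mult:
  "Poly_Mapping.lookup (Poly_Mapping.single k c * g) w = c * (\<Sum>q. Poly_Mapping.lookup g q when w = k + q)"
  unfolding lookup_mult lookup_single
  by (simp add: when_mult Sum_any.delta)

lemma word_plus_eq: "(Word (a#w) = Word [l] + q) = (a = l \<and> q = Word w)"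
  by (cases q) auto

lemma word_nil_plus: "(Word [] = Word [l] + q) = False"
  by (cases q) auto

lemma lk_const_mult: "Poly_Mapping.lookup (ncconst c * g) w = c * Poly_Mapping.lookup g w"
  unfolding ncconst_def lk_single_mult
  by (simp add: zero_ncword_def[symmetric] when_def Sum_any.delta')

lemma lk_var_nil: "Poly_Mapping.lookup (ncvar l * g) (Word []) = 0"
  unfolding ncvar_def lk_single_mult word_nil_plus by simp

lemma lk_var_cons: "Poly_Mapping.lookup (ncvar l * g) (Word (a#w)) = (if a = l then Poly_Mapping.lookup g (Word w) else 0)"
  unfolding ncvar_def lk_single_mult word_plus_eq
  by (simp add: when_def Sum_any.delta')

lemma lk_const: "Poly_Mapping.lookup (ncconst c) w = (if w = Word [] then c else 0)"
  unfolding ncconst_def lookup_single by (auto simp: when_def)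

lemma lk_entry_nil:
  "Poly_Mapping.lookup (als_entry d A0 Al i j * g) (Word []) = A0 i j * Poly_Mapping.lookup g (Word [])"
  unfolding als_entry_def
  by (simp add: distrib_right sum_distrib_right lookup_add lookup_sum mult.assoc lk_const_mult lk_var_nil)

lemma lk_entry_cons:
  "Poly_Mapping.lookup (als_entry d A0 Al i j * g) (Word (a#w)) =
     A0 i j * Poly_Mapping.lookup g (Word (a#w)) + (if a \<in> {1..d} then Al a i j * Poly_Mapping.lookup g (Word w) else 0)"
  unfolding als_entry_def
  by (simp add: distrib_right sum_distrib_right lookup_add lookup_sum mult.assoc lk_const_mult lk_var_cons
      if_distrib[where f="\<lambda>x. _ * x"] cong: if_cong)

lemma lk_entry:
  "Poly_Mapping.lookup (als_entry d A0 Al i j) (Word ws) =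
    (case ws of [] \<Rightarrow> A0 i j | [a] \<Rightarrow> (if a \<in> {1..d} then Al a i j else 0) | _ \<Rightarrow> 0)"
proof (cases ws)
  case Nil
  then show ?thesis using lk_entry_nil[where g=1, of d A0 Al i j]
    by (simp add: lookup_one zero_ncword_def)
next
  case (Cons a w)
  then show ?thesis using lk_entry_cons[where g=1, of d A0 Al i j a w]
    by (auto simp: lookup_one zero_ncword_def split: list.split)
qed

lemma indep_coef:
  assumes "nc_lin_indep s I" "finite I"
    and "\<And>w. (\<Sum>i\<in>I. y i * Poly_Mapping.lookup (s i) w) = 0"
  shows "\<forall>i\<in>I. y i = 0"
proof -
  have "(\<Sum>i\<in>I. ncconst (y i) * s i) = 0"
    by (rule poly_mapping_eqI) (simp add: lookup_sum lk_const_mult assms(3))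
  then show ?thesis using assms(1) unfolding nc_lin_indep_def by blast
qed

lemma tri_solve_aux:
  fixes M :: "nat \<Rightarrow> nat \<Rightarrow> 'k::field"
  assumes diag: "\<forall>j\<in>{m..n}. M j j = 1"
  shows "N \<le> n + 1 - m \<Longrightarrow> \<exists>T. \<forall>j\<in>{m..<m+N}. (\<Sum>i=m..j. T i * M i j) = r j"
proof (induction N)
  case 0
  then show ?case by auto
next
  case (Suc N)
  then obtain T where T: "\<forall>j\<in>{m..<m+N}. (\<Sum>i=m..j. T i * M i j) = r j" by auto
  define J where "J = m + N"
  have Jn: "J \<in> {m..n}" using Suc.prems J_def by auto
  define T' where "T' = T(J := r J - (\<Sum>i=m..<J. T i * M i J))"
  have "\<forall>j\<in>{m..<m+Suc N}. (\<Sum>i=m..j. T' i * M i j) = r j"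
  proof
    fix j assume j: "j \<in> {m..<m+Suc N}"
    show "(\<Sum>i=m..j. T' i * M i j) = r j"
    proof (cases "j = J")
      case True
      have "(\<Sum>i=m..j. T' i * M i j) = (\<Sum>i=m..<J. T' i * M i J) + T' J * M J J"
        using True Jn by (simp add: sum.last_plus atLeastLessThanSuc_atLeastAtMost[symmetric]
           flip: atLeastLessThanSuc_atLeastAtMost)
      also have "(\<Sum>i=m..<J. T' i * M i J) = (\<Sum>i=m..<J. T i * M i J)"
        by (rule sum.cong) (auto simp: T'_def)
      finally show ?thesis using diag Jn True by (simp add: T'_def)
    next
      case False
      then have j': "j \<in> {m..<m+N}" using j J_def by auto
      have "(\<Sum>i=m..j. T' i * M i j) = (\<Sum>i=m..j. T i * M i j)"
        by (rule sum.cong) (use j' J_def in \<open>auto simp: T'_def\<close>)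
      then show ?thesis using T j' by simp
    qed
  qed
  then show ?case by blast
qed

lemma tri_solve:
  fixes M :: "nat \<Rightarrow> nat \<Rightarrow> 'k::field"
  assumes diag: "\<forall>j\<in>{m..n}. M j j = 1"
    and low: "\<forall>i\<in>{m..n}. \<forall>j\<in>{m..n}. j < i \<longrightarrow> M i j = 0"
  shows "\<exists>T. \<forall>j\<in>{m..n}. (\<Sum>i=m..n. T i * M i j) = r j"
proof -
  obtain T where T: "\<forall>j\<in>{m..<m+(n+1-m)}. (\<Sum>i=m..j. T i * M i j) = r j"
    using tri_solve_aux[of m n M "n+1-m" r] diag by auto
  have "\<forall>j\<in>{m..n}. (\<Sum>i=m..n. T i * M i j) = r j"
  proof
    fix j assume j: "j \<in> {m..n}"
    have "(\<Sum>i=m..n. T i * M i j) = (\<Sum>i=m..j. T i * M i j)"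
      by (rule sum.mono_neutral_right) (use j low in auto)
    also have "\<dots> = r j" using T j by auto
    finally show "(\<Sum>i=m..n. T i * M i j) = r j" .
  qed
  then show ?thesis by blast
qed

theorem lemma2p5:
  fixes d n m :: nat
    and A0 :: "nat \<Rightarrow> nat \<Rightarrow> 'k::field"
    and Al :: "nat \<Rightarrow> nat \<Rightarrow> nat \<Rightarrow> 'k"
    and v :: "nat \<Rightarrow> 'k"
    and s :: "nat \<Rightarrow> 'k ncpoly"
  assumes n_ge: "n \<ge> 2"
    and diag: "\<forall>i\<in>{1..n}. als_entry d A0 Al i i = 1"
    and upper: "\<forall>i\<in>{1..n}. \<forall>j\<in>{1..n}. j < i \<longrightarrow> als_entry d A0 Al i j = 0"
    and v_form: "\<forall>i\<in>{1..<n}. v i = 0"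
    and left_family: "\<forall>i\<in>{1..n}. (\<Sum>j=1..n. als_entry d A0 Al i j * s j) = ncconst (v i)"
    and nonzero: "s 1 \<noteq> 0"
    and dependent: "\<not> nc_lin_indep s {1..n}"
    and m_range: "m \<in> {2..n}"
    and m_indep: "nc_lin_indep s {m..n}"
    and m_minimal: "\<forall>k\<in>{1..<m}. \<not> nc_lin_indep s {k..n}"
  shows "\<exists>T U :: nat \<Rightarrow> 'k.
           (\<forall>j\<in>{m..n}. ncconst (U j) + als_entry d A0 Al (m - 1) j
                          - (\<Sum>i=m..n. ncconst (T i) * als_entry d A0 Al i j) = 0)
         \<and> (\<Sum>i=m..n. T i * v i) = 0"
proof -
  define S where "S = (\<lambda>j w. Poly_Mapping.lookup (s j) (Word w))"
  have ent0: "A0 i j = 0 \<and> (\<forall>k\<in>{1..d}. Al k i j = 0)"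
    if "i \<in> {1..n}" "j \<in> {1..n}" "j < i" for i j
  proof -
    have z: "als_entry d A0 Al i j = 0" using upper that by blast
    have "A0 i j = 0" using lk_entry[of d A0 Al i j "[]"] z by simp
    moreover have "Al k i j = 0" if "k \<in> {1..d}" for k
      using lk_entry[of d A0 Al i j "[k]"] z that by simp
    ultimately show ?thesis by blast
  qed
  have diag0: "A0 i i = 1 \<and> (\<forall>k\<in>{1..d}. Al k i i = 0)" if "i \<in> {1..n}" for i
  proof -
    have z: "als_entry d A0 Al i i = 1" using diag that by blast
    have "A0 i i = 1" using lk_entry[of d A0 Al i i "[]"] z by (simp add: lookup_one zero_ncword_def)
    moreover have "Al k i i = 0" if "k \<in> {1..d}" for k
      using lk_entry[of d A0 Al i i "[k]"] z that by (simp add: lookup_one zero_ncword_def)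
    ultimately show ?thesis by blast
  qed
  have row0: "(\<Sum>j=1..n. A0 i j * S j []) = v i" if "i \<in> {1..n}" for i
  proof -
    have "Poly_Mapping.lookup (\<Sum>j=1..n. als_entry d A0 Al i j * s j) (Word []) = Poly_Mapping.lookup (ncconst (v i)) (Word [])"
      using left_family that by simp
    then show ?thesis by (simp add: lookup_sum lk_entry_nil lk_const S_def)
  qed
  have row1: "(\<Sum>j=1..n. A0 i j * S j (k#w)) + (\<Sum>j=1..n. Al k i j * S j w) = 0"
    if "i \<in> {1..n}" "k \<in> {1..d}" for i k w
  proof -
    have "Poly_Mapping.lookup (\<Sum>j=1..n. als_entry d A0 Al i j * s j) (Word (k#w)) = Poly_Mapping.lookup (ncconst (v i)) (Word (k#w))"
      using left_family that by simp
    then show ?thesis using that by (simp add: lookup_sum lk_entry_cons lk_const S_def sum.distrib)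
  qed
  have m1: "m - 1 \<in> {1..n}" "m - 1 < m" "1 \<le> m - 1" "m - 1 < n" using m_range by auto
  have sub: "{m..n} \<subseteq> {1..n}" using m_range by auto
  have red: "(\<Sum>j=1..n. f j) = (\<Sum>j=m..n. f j)"
    if "\<And>j. j \<in> {1..n} \<Longrightarrow> j < m \<Longrightarrow> f j = 0" for f :: "nat \<Rightarrow> 'k"
  proof -
    have "(\<Sum>j=m..n. f j) = (\<Sum>j=1..n. f j)"
      by (rule sum.mono_neutral_left) (use that sub in auto)
    then show ?thesis by simp
  qed
  have row0r: "(\<Sum>j=m..n. A0 i j * S j []) = v i" if "i \<in> {m..n}" for i
  proof -
    have "(\<Sum>j=1..n. A0 i j * S j []) = (\<Sum>j=m..n. A0 i j * S j [])"
      by (rule red) (use ent0 that sub in auto)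
    then show ?thesis using row0 that sub by auto
  qed
  have row1r: "(\<Sum>j=m..n. A0 i j * S j (k#w)) = - (\<Sum>j=m..n. Al k i j * S j w)"
    if "i \<in> {m..n}" "k \<in> {1..d}" for i k w
  proof -
    have "(\<Sum>j=1..n. A0 i j * S j (k#w)) = (\<Sum>j=m..n. A0 i j * S j (k#w))"
      by (rule red) (use ent0 that sub in auto)
    moreover have "(\<Sum>j=1..n. Al k i j * S j w) = (\<Sum>j=m..n. Al k i j * S j w)"
      by (rule red) (use ent0 that sub in auto)
    ultimately show ?thesis using row1[of i k w] that sub by (auto simp: eq_neg_iff_add_eq_0)
  qed
  have "\<not> nc_lin_indep s {m-1..n}" using m_minimal m1 by auto
  then obtain c where c0: "(\<Sum>i\<in>{m-1..n}. ncconst (c i) * s i) = 0" and cnz: "\<exists>i\<in>{m-1..n}. c i \<noteq> 0"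
    unfolding nc_lin_indep_def by blast
  have ins: "{m-1..n} = insert (m-1) {m..n}" using m_range by auto
  have c0': "ncconst (c (m-1)) * s (m-1) + (\<Sum>i\<in>{m..n}. ncconst (c i) * s i) = 0"
    using c0 m_range unfolding ins by (subst (asm) sum.insert) auto
  have cm: "c (m-1) \<noteq> 0"
  proof
    assume "c (m-1) = 0"
    then have "(\<Sum>i\<in>{m..n}. ncconst (c i) * s i) = 0" using c0' by (simp add: ncconst_def)
    then have "\<forall>i\<in>{m..n}. c i = 0" using m_indep unfolding nc_lin_indep_def by blast
    then show False using cnz ins \<open>c (m-1) = 0\<close> by auto
  qed
  define cc where "cc j = - c j / c (m-1)" for j
  have sm1: "S (m-1) w = (\<Sum>j=m..n. cc j * S j w)" for w
  proof -
    have "Poly_Mapping.lookup (ncconst (c (m-1)) * s (m-1) + (\<Sum>i\<in>{m..n}. ncconst (c i) * s i)) (Word w) = 0"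
      using c0' by simp
    then have "c (m-1) * S (m-1) w + (\<Sum>j=m..n. c j * S j w) = 0"
      by (simp add: lookup_add lookup_sum lk_const_mult S_def)
    then have "S (m-1) w = - (\<Sum>j=m..n. c j * S j w) / c (m-1)"
      using cm by (simp add: field_simps eq_neg_iff_add_eq_0)
    also have "\<dots> = (\<Sum>j=m..n. cc j * S j w)"
      by (simp add: cc_def sum_divide_distrib sum_negf[symmetric])
    finally show ?thesis .
  qed
  have redm: "(\<Sum>j=1..n. f j) = f (m-1) + (\<Sum>j=m..n. f j)"
    if "\<And>j. j \<in> {1..n} \<Longrightarrow> j < m - 1 \<Longrightarrow> f j = 0" for f :: "nat \<Rightarrow> 'k"
  proof -
    have "(\<Sum>j=1..n. f j) = (\<Sum>j\<in>{m-1..n}. f j)"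
    proof -
      have "(\<Sum>j\<in>{m-1..n}. f j) = (\<Sum>j=1..n. f j)"
        by (rule sum.mono_neutral_left) (use that m1 in auto)
      then show ?thesis by simp
    qed
    also have "\<dots> = f (m-1) + (\<Sum>j=m..n. f j)" unfolding ins using m_range by (subst sum.insert) auto
    finally show ?thesis .
  qed
  define r where "r j = cc j + A0 (m-1) j" for j
  have rA: "(\<Sum>j=m..n. r j * S j []) = 0"
  proof -
    have "(\<Sum>j=1..n. A0 (m-1) j * S j []) = A0 (m-1) (m-1) * S (m-1) [] + (\<Sum>j=m..n. A0 (m-1) j * S j [])"
      by (rule redm) (use ent0 m1 in auto)
    then have "S (m-1) [] + (\<Sum>j=m..n. A0 (m-1) j * S j []) = 0"
      using row0[of "m-1"] m1 diag0[of "m-1"] v_form by auto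
    then show ?thesis using sm1[of "[]"] by (simp add: r_def distrib_right sum.distrib)
  qed
  have rB: "(\<Sum>j=m..n. r j * S j (k#w)) + (\<Sum>j=m..n. Al k (m-1) j * S j w) = 0"
    if k: "k \<in> {1..d}" for k w
  proof -
    have a: "(\<Sum>j=1..n. A0 (m-1) j * S j (k#w)) = A0 (m-1) (m-1) * S (m-1) (k#w) + (\<Sum>j=m..n. A0 (m-1) j * S j (k#w))"
      by (rule redm) (use ent0 m1 in auto)
    have b: "(\<Sum>j=1..n. Al k (m-1) j * S j w) = Al k (m-1) (m-1) * S (m-1) w + (\<Sum>j=m..n. Al k (m-1) j * S j w)"
      by (rule redm) (use ent0 m1 k in auto)
    have "S (m-1) (k#w) + (\<Sum>j=m..n. A0 (m-1) j * S j (k#w)) + (\<Sum>j=m..n. Al k (m-1) j * S j w) = 0"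
      using row1[of "m-1" k w] a b m1 diag0[of "m-1"] k by auto
    then show ?thesis using sm1[of "k#w"] by (simp add: r_def distrib_right sum.distrib add.assoc)
  qed
  obtain T where Tr: "\<forall>j\<in>{m..n}. (\<Sum>i=m..n. T i * A0 i j) = r j"
    using tri_solve[of m n A0 r] diag0 ent0 sub by blast
  have keyF: "(\<Sum>j=m..n. (Al k (m-1) j - (\<Sum>i=m..n. T i * Al k i j)) * S j w) = 0"
    if k: "k \<in> {1..d}" for k w
  proof -
    have "(\<Sum>j=m..n. r j * S j (k#w)) = (\<Sum>j=m..n. (\<Sum>i=m..n. T i * A0 i j) * S j (k#w))"
      using Tr by simp
    also have "\<dots> = (\<Sum>i=m..n. T i * (\<Sum>j=m..n. A0 i j * S j (k#w)))"
      unfolding sum_distrib_left sum_distrib_right mult.assoc by (rule sum.swap)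
    also have "\<dots> = (\<Sum>i=m..n. T i * (- (\<Sum>j=m..n. Al k i j * S j w)))"
      using row1r k by simp
    also have "\<dots> = - (\<Sum>i=m..n. T i * (\<Sum>j=m..n. Al k i j * S j w))"
      by (simp add: sum_negf)
    also have "(\<Sum>i=m..n. T i * (\<Sum>j=m..n. Al k i j * S j w)) = (\<Sum>j=m..n. (\<Sum>i=m..n. T i * Al k i j) * S j w)"
      unfolding sum_distrib_left sum_distrib_right mult.assoc by (rule sum.swap)
    finally have "(\<Sum>j=m..n. r j * S j (k#w)) = - (\<Sum>j=m..n. (\<Sum>i=m..n. T i * Al k i j) * S j w)" .
    with rB[OF k, of w] show ?thesis
      by (simp add: left_diff_distrib sum_subtractf eq_neg_iff_add_eq_0 add.commute)
  qed
  have G: "\<forall>j\<in>{m..n}. Al k (m-1) j - (\<Sum>i=m..n. T i * Al k i j) = 0" if k: "k \<in> {1..d}" for k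
  proof (rule indep_coef[OF m_indep])
    fix w :: ncword
    obtain ws where "w = Word ws" by (cases w)
    then show "(\<Sum>j=m..n. (Al k (m-1) j - (\<Sum>i=m..n. T i * Al k i j)) * Poly_Mapping.lookup (s j) w) = 0"
      using keyF[OF k, of ws] by (simp add: S_def)
  qed simp
  have H: "(\<Sum>i=m..n. T i * v i) = 0"
  proof -
    have "(\<Sum>i=m..n. T i * v i) = (\<Sum>i=m..n. T i * (\<Sum>j=m..n. A0 i j * S j []))"
      using row0r by simp
    also have "\<dots> = (\<Sum>j=m..n. (\<Sum>i=m..n. T i * A0 i j) * S j [])"
      unfolding sum_distrib_left sum_distrib_right mult.assoc by (rule sum.swap)
    also have "\<dots> = (\<Sum>j=m..n. r j * S j [])" using Tr by simp
    finally show ?thesis using rA by simp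
  qed
  have final: "ncconst (cc j) + als_entry d A0 Al (m - 1) j
                          - (\<Sum>i=m..n. ncconst (T i) * als_entry d A0 Al i j) = 0" if j: "j \<in> {m..n}" for j
  proof (rule poly_mapping_eqI)
    fix w :: ncword
    obtain ws where w: "w = Word ws" by (cases w)
    show "Poly_Mapping.lookup (ncconst (cc j) + als_entry d A0 Al (m - 1) j
                          - (\<Sum>i=m..n. ncconst (T i) * als_entry d A0 Al i j)) w = Poly_Mapping.lookup 0 w"
    proof (cases ws)
      case Nil
      then show ?thesis using Tr j w by (simp add: lookup_add lookup_minus lookup_sum lk_const_mult lk_entry lk_const r_def)
    next
      case (Cons a ws')
      show ?thesis
      proof (cases ws')
        case Nil
        then show ?thesis using G j w Cons
          by (auto simp: lookup_add lookup_minus lookup_sum lk_const_mult lk_entry lk_const)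
      next
        case (Cons b ws'')
        then show ?thesis using w \<open>ws = a # ws'\<close>
          by (simp add: lookup_add lookup_minus lookup_sum lk_const_mult lk_entry lk_const)
      qed
    qed
  qed
  show ?thesis using final H by blast
qed

end
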